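(* The transverse expansion exponent function $\lambda_*(x)=\limsup_{n\to\infty}\frac1n\log\mu_n(x)$ is Borel measurable on $X$, and is constant on the orbits of the holonomy pseudogroup $\mathcal{G}_{\mathcal{F}}$.
   Context: $M$ is a closed Riemannian manifold with a codimension-one $C^1$-foliation $\mathcal{F}$ with oriented normal bundle. Fix a finite regular foliation atlas of transversally orientation-preserving charts $\varphi_\alpha\colon U_\alpha\to(-1,1)^n\times(-1,1)$ with transverse coordinate spaces $X_\alpha=(-1,1)$, and $X$ their disjoint union; $P_\alpha(x)$ is the plaque with transverse coordinate $x$; the transition map $h_{\beta\alpha}$ sends $x$ to $y$ when $P_\alpha(x)\cap P_\beta(y)\ne\emptyset$. A plaque chain $\mathcal{P}$ of length $\|\mathcal{P}\|=k$ is a sequence of $k+1$ plaques with consecutive ones intersecting, with holonomy $h_{\mathcal{P}}$ the composition of the corresponding transition maps on its maximal connected domain $D_{\mathcal{P}}$. $\mathcal{G}_{\mathcal{F}}$ is the pseudogroup on $X$ generated by the transition maps; its orbit of $x$ is $\{h_{\mathcal{P}}(x): x\in D_{\mathcal{P}}\}$. $\mu_0(x)=1$, $\mu_n(x)=\sup\{h_{\mathcal{P}}'(x):x\in D_{\mathcal{P}},\|\mathcal{P}\|\le n\}$. *)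

theory Defs
  imports "HOL-Analysis.Analysis"
begin

text \<open>Foliation charts take values in (leaf coordinates) x (transverse coordinate).\<close>

definition leaf_cube :: "(real^'n) set" where
  "leaf_cube = {v. \<forall>i. \<bar>v$i\<bar> < 1}"

definition closed_leaf_cube :: "(real^'n) set" where
  "closed_leaf_cube = {v. \<forall>i. \<bar>v$i\<bar> \<le> 1}"

definition I1 :: "real set" where
  "I1 = {-1<..<1}"

definition C1_on :: "'b::real_normed_vector set \<Rightarrow> ('b \<Rightarrow> 'c::real_normed_vector) \<Rightarrow> bool" where
  "C1_on S f \<longleftrightarrow> (\<exists>D. (\<forall>v\<in>S. (f has_derivative blinfun_apply (D v)) (at v)) \<and> continuous_on S D)"

definition foliated_chart :: "'a topology \<Rightarrow> 'a set \<Rightarrow> ('a \<Rightarrow> (real^'n) \<times> real) \<Rightarrow> bool" where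
  "foliated_chart M W \<psi> \<longleftrightarrow> openin M W \<and> open (\<psi> ` W) \<and>
     homeomorphic_map (subtopology M W) (top_of_set (\<psi> ` W)) \<psi>"

text \<open>Coherence of two foliated charts for a codimension-one C^1 foliation with
  transversally orientation preserving changes of coordinates: the coordinate change is C^1
  and locally of the form (u,x) -> (g(u,x), h(x)) with h' > 0.\<close>
definition foliated_coherent ::
  "'a set \<Rightarrow> ('a \<Rightarrow> (real^'n) \<times> real) \<Rightarrow> 'a set \<Rightarrow> ('a \<Rightarrow> (real^'n) \<times> real) \<Rightarrow> bool" where
  "foliated_coherent Wa \<psi>a Wb \<psi>b \<longleftrightarrow>
     (let S = \<psi>a ` (Wa \<inter> Wb); \<tau> = (\<lambda>v. \<psi>b (inv_into Wa \<psi>a v)) in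
      C1_on S \<tau> \<and>
      (\<forall>v\<in>S. \<exists>V h. open V \<and> v \<in> V \<and>
          (\<forall>w\<in>S \<inter> V. snd (\<tau> w) = h (snd w)) \<and>
          (\<forall>w\<in>S \<inter> V. \<exists>d. (h has_real_derivative d) (at (snd w)) \<and> d > 0)))"

definition plaque :: "('i \<Rightarrow> 'a \<Rightarrow> (real^'n) \<times> real) \<Rightarrow> ('i \<Rightarrow> 'a set) \<Rightarrow> 'i \<Rightarrow> real \<Rightarrow> 'a set" where
  "plaque \<psi> U \<alpha> x = {p \<in> U \<alpha>. snd (\<psi> \<alpha> p) = x}"

text \<open>Closed plaques of the closure of U_alpha, inside the larger chart W_alpha.\<close>
definition closed_plaque :: "('i \<Rightarrow> 'a \<Rightarrow> (real^'n) \<times> real) \<Rightarrow> ('i \<Rightarrow> 'a set) \<Rightarrow> 'i \<Rightarrow> real \<Rightarrow> 'a set" where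
  "closed_plaque \<psi> W \<alpha> x = {p \<in> W \<alpha>. fst (\<psi> \<alpha> p) \<in> closed_leaf_cube \<and> snd (\<psi> \<alpha> p) = x}"

text \<open>Finite regular foliation atlas (Candel--Conlon, Def. 1.2.11): charts
  phi_alpha = psi_alpha|U_alpha : U_alpha -> (-1,1)^n x (-1,1), each U_alpha having compact
  closure inside the domain W_alpha of a foliated chart psi_alpha, all charts psi_alpha
  mutually coherent, and closed plaques meeting at most one closed plaque of another chart.\<close>
definition regular_foliation_atlas ::
  "'a topology \<Rightarrow> 'i set \<Rightarrow> ('i \<Rightarrow> 'a set) \<Rightarrow> ('i \<Rightarrow> 'a \<Rightarrow> (real^'n) \<times> real) \<Rightarrow> ('i \<Rightarrow> 'a set) \<Rightarrow> bool" where
  "regular_foliation_atlas M A W \<psi> U \<longleftrightarrow>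
     finite A \<and> A \<noteq> {} \<and>
     (\<forall>\<alpha>\<in>A. foliated_chart M (W \<alpha>) (\<psi> \<alpha>)) \<and>
     (\<forall>\<alpha>\<in>A. \<forall>\<beta>\<in>A. foliated_coherent (W \<alpha>) (\<psi> \<alpha>) (W \<beta>) (\<psi> \<beta>)) \<and>
     (\<forall>\<alpha>\<in>A. U \<alpha> \<subseteq> W \<alpha> \<and> \<psi> \<alpha> ` U \<alpha> = leaf_cube \<times> I1) \<and>
     (\<forall>\<alpha>\<in>A. compactin M (M closure_of U \<alpha>) \<and> M closure_of U \<alpha> \<subseteq> W \<alpha>) \<and>
     (\<Union>\<alpha>\<in>A. U \<alpha>) = topspace M \<and>
     (\<forall>\<alpha>\<in>A. \<forall>\<beta>\<in>A.
        M interior_of (M closure_of U \<alpha>) \<inter> M interior_of (M closure_of U \<beta>) \<noteq> {} \<longrightarrow>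
        (\<forall>x\<in>{-1..1}. \<forall>y\<in>{-1..1}. \<forall>y'\<in>{-1..1}.
            closed_plaque \<psi> W \<alpha> x \<inter> closed_plaque \<psi> W \<beta> y \<noteq> {} \<longrightarrow>
            closed_plaque \<psi> W \<alpha> x \<inter> closed_plaque \<psi> W \<beta> y' \<noteq> {} \<longrightarrow> y = y'))"

text \<open>Here pl is the plaque function: pl alpha x = P_alpha(x).\<close>

definition trans_dom :: "('i \<Rightarrow> real \<Rightarrow> 'a set) \<Rightarrow> 'i \<Rightarrow> 'i \<Rightarrow> real set" where
  "trans_dom pl \<alpha> \<beta> = {x \<in> I1. \<exists>y\<in>I1. pl \<alpha> x \<inter> pl \<beta> y \<noteq> {}}"

definition trans_map :: "('i \<Rightarrow> real \<Rightarrow> 'a set) \<Rightarrow> 'i \<Rightarrow> 'i \<Rightarrow> real \<Rightarrow> real" where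
  "trans_map pl \<alpha> \<beta> x = (THE y. y \<in> I1 \<and> pl \<alpha> x \<inter> pl \<beta> y \<noteq> {})"

fun hol_map :: "('i \<Rightarrow> real \<Rightarrow> 'a set) \<Rightarrow> 'i list \<Rightarrow> real \<Rightarrow> real" where
  "hol_map pl (\<alpha> # \<beta> # cs) = hol_map pl (\<beta> # cs) \<circ> trans_map pl \<alpha> \<beta>"
| "hol_map pl cs = id"

fun hol_dom :: "('i \<Rightarrow> real \<Rightarrow> 'a set) \<Rightarrow> 'i list \<Rightarrow> real set" where
  "hol_dom pl (\<alpha> # \<beta> # cs) = {x \<in> trans_dom pl \<alpha> \<beta>. trans_map pl \<alpha> \<beta> x \<in> hol_dom pl (\<beta> # cs)}"
| "hol_dom pl cs = I1"

text \<open>A plaque chain is a nonempty list of plaques (chart index, transverse coordinate),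
  consecutive ones intersecting; its length is (number of plaques) - 1.\<close>
definition plaque_chain :: "('i \<Rightarrow> real \<Rightarrow> 'a set) \<Rightarrow> 'i set \<Rightarrow> ('i \<times> real) list \<Rightarrow> bool" where
  "plaque_chain pl A P \<longleftrightarrow> P \<noteq> [] \<and> (\<forall>q\<in>set P. fst q \<in> A \<and> snd q \<in> I1) \<and>
     (\<forall>i. Suc i < length P \<longrightarrow> pl (fst (P!i)) (snd (P!i)) \<inter> pl (fst (P!Suc i)) (snd (P!Suc i)) \<noteq> {})"

definition chain_len :: "('i \<times> real) list \<Rightarrow> nat" where
  "chain_len P = length P - 1"

definition chain_hol :: "('i \<Rightarrow> real \<Rightarrow> 'a set) \<Rightarrow> ('i \<times> real) list \<Rightarrow> real \<Rightarrow> real" where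
  "chain_hol pl P = hol_map pl (map fst P)"

definition chain_dom :: "('i \<Rightarrow> real \<Rightarrow> 'a set) \<Rightarrow> ('i \<times> real) list \<Rightarrow> real set" where
  "chain_dom pl P = connected_component_set (hol_dom pl (map fst P)) (snd (hd P))"

text \<open>Points of X (disjoint union of the X_alpha) are pairs (alpha, x) with x in X_alpha.\<close>

definition orbit :: "('i \<Rightarrow> real \<Rightarrow> 'a set) \<Rightarrow> 'i set \<Rightarrow> 'i \<times> real \<Rightarrow> ('i \<times> real) set" where
  "orbit pl A p = {(fst (last P), chain_hol pl P (snd p)) | P.
      plaque_chain pl A P \<and> fst (hd P) = fst p \<and> snd p \<in> chain_dom pl P}"

definition mu :: "('i \<Rightarrow> real \<Rightarrow> 'a set) \<Rightarrow> 'i set \<Rightarrow> nat \<Rightarrow> 'i \<times> real \<Rightarrow> real" where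
  "mu pl A n p = (if n = 0 then 1 else
      Sup {deriv (chain_hol pl P) (snd p) | P.
             plaque_chain pl A P \<and> fst (hd P) = fst p \<and> snd p \<in> chain_dom pl P \<and> chain_len P \<le> n})"

definition lambda_star :: "('i \<Rightarrow> real \<Rightarrow> 'a set) \<Rightarrow> 'i set \<Rightarrow> 'i \<times> real \<Rightarrow> ereal" where
  "lambda_star pl A p = limsup (\<lambda>n. ereal (ln (mu pl A n p) / real n))"

end

theory Submission
  imports Defs
begin

lemma limsup_shift:
  fixes a b :: "nat \<Rightarrow> real"
  assumes h: "\<And>n. b n + C \<le> a (n+k)"
  shows "limsup (\<lambda>n. ereal (b n / real n)) \<le> limsup (\<lambda>n. ereal (a n / real n))"
  unfolding Limsup_le_iff
proof (intro allI impI)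
  fix y assume y: "y > limsup (\<lambda>n. ereal (a n / real n))"
  show "\<forall>\<^sub>F n in sequentially. y > ereal (b n / real n)"
  proof (cases y)
    case PInf then show ?thesis by simp
  next
    case MInf then show ?thesis using y by simp
  next
    case (real w)
    obtain z where z: "limsup (\<lambda>n. ereal (a n / real n)) < ereal z" "ereal z < y" using ereal_dense2[OF y] by blast
    have ev1: "\<forall>\<^sub>F n in sequentially. ereal (a n / real n) < ereal z" using Limsup_lessD[OF z(1)] .
    then obtain N where N: "\<And>n. n \<ge> N \<Longrightarrow> a n / real n < z" by (auto simp: eventually_sequentially)
    have zw: "z < w" using z(2) real by simp
    have "(\<lambda>n. z + (z * real k - C) * (1 / real n)) \<longlonglongrightarrow> z + (z * real k - C) * 0"
      by (intro tendsto_intros lim_inverse_n')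
    then have "(\<lambda>n. z + (z * real k - C) * (1 / real n)) \<longlonglongrightarrow> z" by simp
    then have ev2: "\<forall>\<^sub>F n in sequentially. z + (z * real k - C) * (1 / real n) < w"
      using zw by (rule order_tendstoD)
    have ev3: "\<forall>\<^sub>F n in sequentially. n \<ge> max N 1" by (rule eventually_ge_at_top)
    show ?thesis
    proof (rule eventually_mono[OF eventually_conj[OF ev2 ev3]])
      fix n assume n: "z + (z * real k - C) * (1 / real n) < w \<and> max N 1 \<le> n"
      have np: "real n > 0" using n by auto
      have "a (n+k) / real (n+k) < z" using N[of "n+k"] n by auto
      then have "a (n+k) < z * real (n+k)" using n by (simp add: divide_less_eq)
      then have "b n < z * real (n+k) - C" using h[of n] by linarith
      also have "\<dots> = real n * (z + (z * real k - C) * (1 / real n))" using np by (simp add: field_simps)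
      finally have "b n / real n < z + (z * real k - C) * (1 / real n)" using np by (simp add: divide_less_eq mult.commute)
      then show "y > ereal (b n / real n)" using n real by simp
    qed
  qed
qed


locale hol_pg =
  fixes pl :: "'i \<Rightarrow> real \<Rightarrow> 'a set" and A :: "'i set"
  assumes finA: "finite A"
  and uniq: "\<And>a b x y y'. a\<in>A \<Longrightarrow> b\<in>A \<Longrightarrow> y\<in>I1 \<Longrightarrow> y'\<in>I1 \<Longrightarrow> pl a x \<inter> pl b y \<noteq> {}
             \<Longrightarrow> pl a x \<inter> pl b y' \<noteq> {} \<Longrightarrow> y = y'"
  and opn: "\<And>a b. a\<in>A \<Longrightarrow> b\<in>A \<Longrightarrow> open (trans_dom pl a b)"
  and der: "\<And>a b x. a\<in>A \<Longrightarrow> b\<in>A \<Longrightarrow> x \<in> trans_dom pl a b \<Longrightarrow>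
             \<exists>d>0. (trans_map pl a b has_real_derivative d) (at x)"
begin

lemma tm_prop:
  assumes "a\<in>A" "b\<in>A" "x \<in> trans_dom pl a b"
  shows "trans_map pl a b x \<in> I1 \<and> pl a x \<inter> pl b (trans_map pl a b x) \<noteq> {}"
proof -
  obtain y where y: "y \<in> I1" "pl a x \<inter> pl b y \<noteq> {}" using assms(3) unfolding trans_dom_def by auto
  have "trans_map pl a b x = y" unfolding trans_map_def
    by (rule the_equality) (use y uniq[OF assms(1,2)] in auto)
  then show ?thesis using y by simp
qed

lemma tm_eq:
  assumes "a\<in>A" "b\<in>A" "x\<in>I1" "y\<in>I1" "pl a x \<inter> pl b y \<noteq> {}"
  shows "x \<in> trans_dom pl a b \<and> trans_map pl a b x = y"
proof -
  have d: "x \<in> trans_dom pl a b" using assms unfolding trans_dom_def by auto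
  show ?thesis using tm_prop[OF assms(1,2) d] uniq[OF assms(1,2) _ assms(4)] assms(5) d by blast
qed

lemma tm_inv:
  assumes "a\<in>A" "b\<in>A" "x \<in> trans_dom pl a b"
  shows "trans_map pl a b x \<in> trans_dom pl b a \<and> trans_map pl b a (trans_map pl a b x) = x"
proof -
  have x: "x \<in> I1" using assms(3) unfolding trans_dom_def by auto
  have "pl b (trans_map pl a b x) \<inter> pl a x \<noteq> {}" using tm_prop[OF assms] by blast
  then show ?thesis using tm_eq[OF assms(2,1) _ x] tm_prop[OF assms] by blast
qed

lemma hd_sub: "hol_dom pl cs \<subseteq> I1"
  by (induction cs rule: induct_list012) (auto simp: trans_dom_def)

lemma hm_I1: "set cs \<subseteq> A \<Longrightarrow> x \<in> hol_dom pl cs \<Longrightarrow> hol_map pl cs x \<in> I1"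
  by (induction cs arbitrary: x rule: induct_list012) auto

lemma hm_deriv: "set cs \<subseteq> A \<Longrightarrow> x \<in> hol_dom pl cs \<Longrightarrow>
   \<exists>d>0. (hol_map pl cs has_real_derivative d) (at x)"
proof (induction cs arbitrary: x rule: induct_list012)
  case (3 a b cs)
  have ab: "a\<in>A" "b\<in>A" "x \<in> trans_dom pl a b" using "3.prems" by auto
  then obtain d where d: "d>0" "(trans_map pl a b has_real_derivative d) (at x)"
    using der by blast
  have "\<exists>e>0. (hol_map pl (b#cs) has_real_derivative e) (at (trans_map pl a b x))"
    using "3.IH"(2)[of "trans_map pl a b x"] "3.prems" by auto
  then obtain e where e: "e>0" "(hol_map pl (b#cs) has_real_derivative e) (at (trans_map pl a b x))"
    by auto
  have "(hol_map pl (b#cs) \<circ> trans_map pl a b has_real_derivative e * d) (at x)"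
    by (rule DERIV_chain[OF e(2) d(2)])
  then show ?case using d e by (auto simp: o_def intro!: exI[of _ "e*d"])
next
  case 1 then show ?case by (auto intro!: exI[of _ 1] simp: id_def)
next
  case (2 v) then show ?case by (auto intro!: exI[of _ 1] simp: id_def)
qed

lemma hd_open: "set cs \<subseteq> A \<Longrightarrow> open (hol_dom pl cs)"
proof (induction cs rule: induct_list012)
  case (3 a b cs)
  have c: "continuous_on (trans_dom pl a b) (trans_map pl a b)"
  proof (rule continuous_at_imp_continuous_on, rule ballI)
    fix x assume "x \<in> trans_dom pl a b"
    moreover have "a\<in>A" "b\<in>A" using "3.prems" by auto
    ultimately obtain d where "(trans_map pl a b has_real_derivative d) (at x)" using der by blast
    then show "isCont (trans_map pl a b) x" by (rule DERIV_isCont)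
  qed
  have o: "open (trans_dom pl a b)" using opn "3.prems" by auto
  have "open (trans_map pl a b -` hol_dom pl (b#cs) \<inter> trans_dom pl a b)"
    using continuous_on_open_vimage[OF o] c "3.IH" "3.prems" by auto
  moreover have "trans_map pl a b -` hol_dom pl (b#cs) \<inter> trans_dom pl a b =
     {x \<in> trans_dom pl a b. trans_map pl a b x \<in> hol_dom pl (b#cs)}" by auto
  ultimately have "open {x \<in> trans_dom pl a b. trans_map pl a b x \<in> hol_dom pl (b#cs)}" by simp
  then show ?case by simp
qed (auto simp: I1_def)

lemma hol_append:
  assumes "cs \<noteq> []" "ds \<noteq> []" "last cs = hd ds"
  shows "hol_map pl (cs @ tl ds) = hol_map pl ds \<circ> hol_map pl cs \<and>
         hol_dom pl (cs @ tl ds) = {x \<in> hol_dom pl cs. hol_map pl cs x \<in> hol_dom pl ds}"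
  using assms
proof (induction cs rule: induct_list012)
  case (3 a b cs)
  then show ?case by auto
next
  case (2 v)
  then have "[v] @ tl ds = ds" by (cases ds) auto
  then show ?case using hd_sub[of ds] by auto
qed auto


lemma hol_rev:
  "set cs \<subseteq> A \<Longrightarrow> x \<in> hol_dom pl cs \<Longrightarrow>
   hol_map pl cs x \<in> hol_dom pl (rev cs) \<and> hol_map pl (rev cs) (hol_map pl cs x) = x"
proof (induction cs arbitrary: x rule: induct_list012)
  case (3 a b cs)
  have ab: "a\<in>A" "b\<in>A" "x \<in> trans_dom pl a b" using "3.prems" by auto
  define y where "y = trans_map pl a b x"
  have y: "y \<in> hol_dom pl (b#cs)" using "3.prems" y_def by auto
  have inv: "y \<in> trans_dom pl b a" "trans_map pl b a y = x" using tm_inv[OF ab] y_def by auto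
  have x1: "x \<in> I1" using ab(3) by (auto simp: trans_dom_def)
  define z where "z = hol_map pl (b#cs) y"
  have IH: "z \<in> hol_dom pl (rev (b#cs))" "hol_map pl (rev (b#cs)) z = y"
    using "3.IH"(2)[OF _ y] "3.prems" z_def by auto
  have app: "hol_map pl (rev (b#cs) @ tl [b,a]) = hol_map pl [b,a] \<circ> hol_map pl (rev (b#cs)) \<and>
     hol_dom pl (rev (b#cs) @ tl [b,a]) = {x \<in> hol_dom pl (rev (b#cs)). hol_map pl (rev (b#cs)) x \<in> hol_dom pl [b,a]}"
    by (rule hol_append) auto
  have e: "rev (a#b#cs) = rev (b#cs) @ tl [b,a]" by simp
  have "hol_map pl (a#b#cs) x = z" using z_def y_def by simp
  moreover have "y \<in> hol_dom pl [b,a]" using inv x1 by simp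
  ultimately show ?case using app IH inv unfolding e by auto
qed auto

lemma chain_exists:
  "set cs \<subseteq> A \<Longrightarrow> cs \<noteq> [] \<Longrightarrow> x \<in> hol_dom pl cs \<Longrightarrow>
   \<exists>P. plaque_chain pl A P \<and> map fst P = cs \<and> snd (hd P) = x"
proof (induction cs arbitrary: x rule: induct_list012)
  case (2 a)
  then show ?case by (intro exI[of _ "[(a,x)]"]) (auto simp: plaque_chain_def)
next
  case (3 a b cs)
  have ab: "a\<in>A" "b\<in>A" "x \<in> trans_dom pl a b" using "3.prems" by auto
  define y where "y = trans_map pl a b x"
  have y: "y \<in> hol_dom pl (b#cs)" using "3.prems" y_def by auto
  obtain P where P: "plaque_chain pl A P" "map fst P = b#cs" "snd (hd P) = y"
    using "3.IH"(2)[OF _ _ y] "3.prems" by auto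
  have x1: "x \<in> I1" using ab(3) by (auto simp: trans_dom_def)
  have int: "pl a x \<inter> pl b y \<noteq> {}" using tm_prop[OF ab] y_def by auto
  have Pne: "P \<noteq> []" using P(2) by auto
  have hdP: "hd P = (b, y)" using P(2,3) Pne by (cases P) auto
  have "plaque_chain pl A ((a,x)#P)"
    unfolding plaque_chain_def
  proof (intro conjI allI impI)
    show "\<forall>q\<in>set ((a, x) # P). fst q \<in> A \<and> snd q \<in> I1" using P(1) ab x1 by (auto simp: plaque_chain_def)
    fix i assume i: "Suc i < length ((a, x) # P)"
    show "pl (fst (((a, x) # P) ! i)) (snd (((a, x) # P) ! i)) \<inter>
          pl (fst (((a, x) # P) ! Suc i)) (snd (((a, x) # P) ! Suc i)) \<noteq> {}"
    proof (cases i)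
      case 0 then show ?thesis using int hdP Pne by (cases P) auto
    next
      case (Suc j) then show ?thesis using P(1) i unfolding plaque_chain_def by auto
    qed
  qed simp
  then show ?case using P by (intro exI[of _ "(a,x)#P"]) auto
qed auto

definition gg :: "'i list \<Rightarrow> real \<Rightarrow> real" where
  "gg cs x = (if x \<in> hol_dom pl cs then deriv (hol_map pl cs) x else 1)"

definition LL :: "nat \<Rightarrow> 'i \<Rightarrow> 'i list set" where
  "LL n a = {cs. set cs \<subseteq> A \<and> length cs \<le> Suc n \<and> cs \<noteq> [] \<and> hd cs = a}"

lemma LL_fin: "finite (LL n a)"
  unfolding LL_def by (rule finite_subset[OF _ finite_lists_length_le[OF finA, of "Suc n"]]) auto

lemma single_LL: "a \<in> A \<Longrightarrow> [a] \<in> LL n a" by (auto simp: LL_def)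

lemma deriv_id1: "deriv id x = (1::real)"
  by (rule DERIV_imp_deriv) (simp add: id_def)

lemma mu_set:
  assumes "a \<in> A" "x \<in> I1"
  shows "{deriv (chain_hol pl P) x | P.
             plaque_chain pl A P \<and> fst (hd P) = a \<and> x \<in> chain_dom pl P \<and> chain_len P \<le> n}
        = (\<lambda>cs. gg cs x) ` LL n a" (is "?S = ?T")
proof
  show "?S \<subseteq> ?T"
  proof
    fix v assume "v \<in> ?S"
    then obtain P where P: "v = deriv (chain_hol pl P) x" "plaque_chain pl A P" "fst (hd P) = a"
       "x \<in> chain_dom pl P" "chain_len P \<le> n" by blast
    have ne: "P \<noteq> []" using P(2) by (simp add: plaque_chain_def)
    have xd: "x \<in> hol_dom pl (map fst P)" using P(4) connected_component_subset unfolding chain_dom_def by blast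
    have "map fst P \<in> LL n a" using P(2,3,5) ne unfolding LL_def plaque_chain_def chain_len_def
      by (auto simp: hd_map)
    moreover have "v = gg (map fst P) x" using P(1) xd by (simp add: gg_def chain_hol_def)
    ultimately show "v \<in> ?T" by blast
  qed
next
  show "?T \<subseteq> ?S"
  proof
    fix v assume "v \<in> ?T"
    then obtain cs where cs: "cs \<in> LL n a" "v = gg cs x" by blast
    show "v \<in> ?S"
    proof (cases "x \<in> hol_dom pl cs")
      case True
      obtain P where P: "plaque_chain pl A P" "map fst P = cs" "snd (hd P) = x"
        using chain_exists[OF _ _ True] cs(1) unfolding LL_def by auto
      have ne: "P \<noteq> []" using P(1) by (simp add: plaque_chain_def)
      have "x \<in> chain_dom pl P" unfolding chain_dom_def P(2) P(3)[symmetric]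
        using True P(3) by (simp add: connected_component_refl)
      moreover have "fst (hd P) = a" using cs(1) P(2) ne unfolding LL_def by (auto simp: hd_map[symmetric])
      moreover have "chain_len P \<le> n" using cs(1) P(2) unfolding LL_def chain_len_def by auto
      moreover have "v = deriv (chain_hol pl P) x" using cs(2) True P(2) by (simp add: gg_def chain_hol_def)
      ultimately show ?thesis using P(1) by blast
    next
      case False
      have "plaque_chain pl A [(a,x)]" using assms by (simp add: plaque_chain_def)
      moreover have "x \<in> chain_dom pl [(a,x)]" using assms
        by (simp add: chain_dom_def connected_component_refl)
      moreover have "v = deriv (chain_hol pl [(a,x)]) x" using cs(2) False
        by (simp add: gg_def chain_hol_def deriv_id1)
      ultimately show ?thesis by (force simp: chain_len_def)
    qed
  qed
qed

lemma mu_eq: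
  assumes "a \<in> A" "x \<in> I1" "n > 0"
  shows "mu pl A n (a,x) = Max ((\<lambda>cs. gg cs x) ` LL n a)"
  using mu_set[OF assms(1,2), of n] assms LL_fin single_LL[OF assms(1), of n]
  by (auto simp: mu_def intro!: cSup_eq_Max)


lemma gg_single: "x \<in> I1 \<Longrightarrow> gg [a] x = 1"
  by (simp add: gg_def deriv_id1)

lemma mu_ge:
  assumes "a \<in> A" "x \<in> I1" "n > 0" "cs \<in> LL n a"
  shows "gg cs x \<le> mu pl A n (a,x)"
  unfolding mu_eq[OF assms(1-3)] using LL_fin assms(4) by (intro Max_ge) auto

lemma mu_ge1:
  assumes "a \<in> A" "x \<in> I1"
  shows "1 \<le> mu pl A n (a,x)"
proof (cases "n = 0")
  case True then show ?thesis by (simp add: mu_def)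
next
  case False then show ?thesis using mu_ge[OF assms _ single_LL[OF assms(1)]] gg_single[OF assms(2)] by auto
qed

lemma mu_in:
  assumes "a \<in> A" "x \<in> I1" "n > 0"
  shows "\<exists>cs\<in>LL n a. mu pl A n (a,x) = gg cs x"
proof -
  have "Max ((\<lambda>cs. gg cs x) ` LL n a) \<in> (\<lambda>cs. gg cs x) ` LL n a"
    using LL_fin single_LL[OF assms(1)] by (intro Max_in) auto
  then show ?thesis unfolding mu_eq[OF assms] by auto
qed

lemma gg_pos: "set cs \<subseteq> A \<Longrightarrow> x \<in> hol_dom pl cs \<Longrightarrow> gg cs x > 0 \<and> (hol_map pl cs has_real_derivative gg cs x) (at x)"
  using hm_deriv[of cs x] by (auto simp: gg_def DERIV_imp_deriv)

lemma shift:
  assumes cs: "set cs \<subseteq> A" "cs \<noteq> []" "hd cs = a" and x: "x \<in> hol_dom pl cs"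
  shows "mu pl A n (last cs, hol_map pl cs x) * gg cs x \<le> mu pl A (n + (length cs - 1)) (a, x)"
proof -
  define k where "k = length cs - 1"
  define y where "y = hol_map pl cs x"
  have aA: "a \<in> A" using cs by (cases cs) auto
  have bA: "last cs \<in> A" using cs by auto
  have x1: "x \<in> I1" using x hd_sub by auto
  have y1: "y \<in> I1" using hm_I1[OF cs(1) x] y_def by simp
  have c: "gg cs x > 0" "(hol_map pl cs has_real_derivative gg cs x) (at x)" using gg_pos[OF cs(1) x] by auto
  have csL: "n + k > 0 \<Longrightarrow> cs \<in> LL (n+k) a" using cs unfolding LL_def k_def by auto
  have main: "mu pl A n (last cs, y) * gg cs x \<le> mu pl A (n+k) (a,x)"
  proof (cases "n = 0")
    case True
    show ?thesis
    proof (cases "k = 0")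
      case True
      then have "cs = [a]" using cs unfolding k_def by (cases cs) auto
      then show ?thesis using \<open>n = 0\<close> True gg_single[OF x1] by (simp add: mu_def)
    next
      case False
      have h: "gg cs x \<le> mu pl A (n+k) (a,x)" using mu_ge[OF aA x1 _ csL] False by simp
      have m0: "mu pl A n (last cs, y) = 1" using \<open>n=0\<close> by (simp add: mu_def)
      show ?thesis using h m0 by simp
    qed
  next
    case False
    obtain ds where ds: "ds \<in> LL n (last cs)" "mu pl A n (last cs, y) = gg ds y"
      using mu_in[OF bA y1] False by auto
    show ?thesis
    proof (cases "y \<in> hol_dom pl ds")
      case False
      then show ?thesis using ds mu_ge[OF aA x1 _ csL] \<open>n \<noteq> 0\<close> by (simp add: gg_def)
    next
      case True
      have dsA: "set ds \<subseteq> A" "ds \<noteq> []" "hd ds = last cs" using ds(1) unfolding LL_def by auto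
      have app: "hol_map pl (cs @ tl ds) = hol_map pl ds \<circ> hol_map pl cs \<and>
         hol_dom pl (cs @ tl ds) = {x \<in> hol_dom pl cs. hol_map pl cs x \<in> hol_dom pl ds}"
        by (rule hol_append) (use cs dsA in auto)
      have xe: "x \<in> hol_dom pl (cs @ tl ds)" using app x True y_def by auto
      have e: "(hol_map pl ds has_real_derivative gg ds y) (at y)" using gg_pos[OF dsA(1) True] by auto
      have "(hol_map pl ds \<circ> hol_map pl cs has_real_derivative gg ds y * gg cs x) (at x)"
        using DERIV_chain[OF e[unfolded y_def] c(2)] y_def by simp
      then have "gg (cs @ tl ds) x = gg ds y * gg cs x"
        using xe app by (simp add: gg_def DERIV_imp_deriv)
      moreover have "cs @ tl ds \<in> LL (n+k) a"
        using cs dsA ds(1) unfolding LL_def k_def by (auto dest: list.set_sel(2))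
      ultimately show ?thesis using ds(2) mu_ge[OF aA x1, of "n+k" "cs @ tl ds"] False by simp
    qed
  qed
  then show ?thesis unfolding k_def y_def .
qed


lemma ln_shift:
  assumes "a \<in> A" "x \<in> I1" "b \<in> A" "y \<in> I1" "c > 0"
    and "\<And>n. mu pl A n (b,y) * c \<le> mu pl A (n+k) (a,x)"
  shows "ln (mu pl A n (b,y)) + ln c \<le> ln (mu pl A (n+k) (a,x))"
proof -
  have p1: "mu pl A n (b,y) > 0" using mu_ge1[OF assms(3,4), of n] by linarith
  have "ln (mu pl A n (b,y)) + ln c = ln (mu pl A n (b,y) * c)" using p1 assms(5) by (simp add: ln_mult)
  also have "\<dots> \<le> ln (mu pl A (n+k) (a,x))" using assms(6)[of n] p1 assms(5) by (intro ln_mono) auto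
  finally show ?thesis .
qed

lemma lam_orbit:
  assumes p: "p \<in> A \<times> I1" and q: "q \<in> orbit pl A p"
  shows "lambda_star pl A q = lambda_star pl A p"
proof -
  obtain a x where ax: "p = (a,x)" "a \<in> A" "x \<in> I1" using p by auto
  obtain P where P: "q = (fst (last P), chain_hol pl P x)" "plaque_chain pl A P" "fst (hd P) = a"
      "x \<in> chain_dom pl P" using q ax(1) unfolding orbit_def by auto
  define cs where "cs = map fst P"
  have ne: "P \<noteq> []" using P(2) by (simp add: plaque_chain_def)
  have cs: "set cs \<subseteq> A" "cs \<noteq> []" "hd cs = a" using P(2,3) ne unfolding cs_def plaque_chain_def
    by (auto simp: hd_map)
  have xd: "x \<in> hol_dom pl cs" using P(4) connected_component_subset unfolding chain_dom_def cs_def by blast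
  define y where "y = hol_map pl cs x"
  define b where "b = last cs"
  have q': "q = (b, y)" using P(1) ne unfolding b_def y_def cs_def chain_hol_def by (simp add: last_map)
  have bA: "b \<in> A" using cs b_def by auto
  have y1: "y \<in> I1" using hm_I1[OF cs(1) xd] y_def by simp
  have r: "y \<in> hol_dom pl (rev cs)" "hol_map pl (rev cs) y = x" using hol_rev[OF cs(1) xd] y_def by auto
  have rcs: "set (rev cs) \<subseteq> A" "rev cs \<noteq> []" "hd (rev cs) = b" using cs b_def by (auto simp: hd_rev)
  have lr: "last (rev cs) = a" using cs by (simp add: last_rev)
  define k where "k = length cs - 1"
  have s1: "\<And>n. mu pl A n (b,y) * gg cs x \<le> mu pl A (n+k) (a,x)"
    using shift[OF cs xd] unfolding b_def y_def k_def by simp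
  have s2: "\<And>n. mu pl A n (a,x) * gg (rev cs) y \<le> mu pl A (n+k) (b,y)"
    using shift[OF rcs r(1)] r(2) lr unfolding k_def by simp
  have c1: "gg cs x > 0" using gg_pos[OF cs(1) xd] by auto
  have c2: "gg (rev cs) y > 0" using gg_pos[OF rcs(1) r(1)] by auto
  have "lambda_star pl A (b,y) \<le> lambda_star pl A (a,x)"
    unfolding lambda_star_def
    by (rule limsup_shift[where C = "ln (gg cs x)" and k = k])
       (rule ln_shift[OF ax(2,3) bA y1 c1 s1])
  moreover have "lambda_star pl A (a,x) \<le> lambda_star pl A (b,y)"
    unfolding lambda_star_def
    by (rule limsup_shift[where C = "ln (gg (rev cs) y)" and k = k])
       (rule ln_shift[OF bA y1 ax(2,3) c2 s2])
  ultimately show ?thesis using ax(1) q' by simp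
qed


lemma gg_meas:
  assumes cs: "set cs \<subseteq> A"
  shows "gg cs \<in> borel_measurable borel"
proof -
  define E where "E = hol_dom pl cs"
  define f where "f = hol_map pl cs"
  have oE: "open E" using hd_open[OF cs] E_def by simp
  have cont: "continuous_on E f"
  proof (rule continuous_at_imp_continuous_on, rule ballI)
    fix x assume "x \<in> E"
    then obtain d where "(f has_real_derivative d) (at x)" using hm_deriv[OF cs] E_def f_def by blast
    then show "isCont f x" by (rule DERIV_isCont)
  qed
  define F where "F = (\<lambda>y. if y \<in> E then f y else 0)"
  have Fm[measurable]: "F \<in> borel_measurable borel"
    unfolding F_def by (rule borel_measurable_continuous_on_if[OF borel_open[OF oE] cont]) (rule continuous_on_const)
  have Em[measurable]: "E \<in> sets borel" using borel_open[OF oE] .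
  define q where "q = (\<lambda>k x. if x \<in> E then (F (x + 1 / real (Suc k)) - F x) * real (Suc k) else 1)"
  have qm: "\<And>k. q k \<in> borel_measurable borel" unfolding q_def by measurable
  have lim: "\<And>x. (\<lambda>k. q k x) \<longlonglongrightarrow> gg cs x"
  proof -
    fix x
    show "(\<lambda>k. q k x) \<longlonglongrightarrow> gg cs x"
    proof (cases "x \<in> E")
      case False then show ?thesis by (simp add: q_def gg_def E_def)
    next
      case True
      have d: "(f has_real_derivative gg cs x) (at x)" using gg_pos[OF cs] True E_def f_def by auto
      have d2: "((\<lambda>y. (f y - f x) / (y - x)) \<longlongrightarrow> gg cs x) (at x)"
        using d by (simp add: has_field_derivative_iff)
      define s where "s = (\<lambda>k::nat. x + 1 / real (Suc k))"
      have st: "s \<longlonglongrightarrow> x"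
      proof -
        have "(\<lambda>k. x + 1 / real (Suc k)) \<longlonglongrightarrow> x + 0"
          by (intro tendsto_intros LIMSEQ_Suc[OF lim_inverse_n'])
        then show ?thesis by (simp add: s_def)
      qed
      have sf: "filterlim s (at x) sequentially"
        unfolding filterlim_at using st by (auto simp: s_def)
      have c: "(\<lambda>k. (f (s k) - f x) / (s k - x)) \<longlonglongrightarrow> gg cs x"
        using filterlim_compose[OF d2 sf] by simp
      have ev: "\<forall>\<^sub>F k in sequentially. s k \<in> E" using topological_tendstoD[OF st oE True] .
      show ?thesis
      proof (rule Lim_transform_eventually[OF c])
        show "\<forall>\<^sub>F k in sequentially. (f (s k) - f x) / (s k - x) = q k x"
          using ev by eventually_elim (use True in \<open>simp add: q_def F_def s_def\<close>)
      qed
    qed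
  qed
  show ?thesis by (rule borel_measurable_LIMSEQ_real[OF lim qm])
qed

lemma lam_meas:
  assumes a: "a \<in> A"
  shows "(\<lambda>x. lambda_star pl A (a, x)) \<in> borel_measurable (restrict_space borel I1)"
proof -
  define Mf where "Mf = (\<lambda>n x. if n = 0 then 1 else Max ((\<lambda>cs. gg cs x) ` LL n a))"
  have Mm: "\<And>n. Mf n \<in> borel_measurable borel"
  proof -
    fix n
    show "Mf n \<in> borel_measurable borel"
    proof (cases "n = 0")
      case True then show ?thesis by (simp add: Mf_def)
    next
      case False
      have "(\<lambda>x. Max ((\<lambda>cs. gg cs x) ` LL n a)) \<in> borel_measurable borel"
        by (rule borel_measurable_Max[OF LL_fin]) (rule gg_meas, auto simp: LL_def)
      then show ?thesis using False by (simp add: Mf_def)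
    qed
  qed
  have "(\<lambda>x. limsup (\<lambda>n. ereal (ln (Mf n x) / real n))) \<in> borel_measurable borel"
  proof (rule borel_measurable_limsup)
    fix n
    have [measurable]: "Mf n \<in> borel_measurable borel" by (rule Mm)
    show "(\<lambda>x. ereal (ln (Mf n x) / real n)) \<in> borel_measurable borel" by measurable
  qed
  then have m: "(\<lambda>x. limsup (\<lambda>n. ereal (ln (Mf n x) / real n))) \<in> borel_measurable (restrict_space borel I1)"
    by (rule measurable_restrict_space1)
  show ?thesis
  proof (rule measurable_cong[THEN iffD1, OF _ m])
    fix x assume "x \<in> space (restrict_space borel I1)"
    then have x: "x \<in> I1" by (simp add: space_restrict_space)
    have "\<And>n. mu pl A n (a,x) = Mf n x"
      using mu_eq[OF a x] by (auto simp: Mf_def mu_def)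
    then show "limsup (\<lambda>n. ereal (ln (Mf n x) / real n)) = lambda_star pl A (a, x)"
      by (simp add: lambda_star_def)
  qed
qed

end


lemma open_leaf_cube: "open (leaf_cube :: (real^'n) set)"
proof -
  have "leaf_cube = (\<Inter>i\<in>UNIV. {v::real^'n. \<bar>v$i\<bar> < 1})" unfolding leaf_cube_def by auto
  moreover have "open (\<Inter>i\<in>UNIV. {v::real^'n. \<bar>v$i\<bar> < 1})"
  proof (rule open_INT)
    show "finite (UNIV :: 'n set)" by simp
    show "\<forall>i\<in>UNIV. open {v::real^'n. \<bar>v$i\<bar> < 1}"
      by (intro ballI open_Collect_less continuous_intros)
  qed
  ultimately show ?thesis by simp
qed

lemma open_I1: "open I1" unfolding I1_def by simp

context
  fixes M :: "'a topology" and A :: "'i set" and W U :: "'i \<Rightarrow> 'a set"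
    and \<psi> :: "'i \<Rightarrow> 'a \<Rightarrow> (real^'n) \<times> real"
  assumes atl: "regular_foliation_atlas M A W \<psi> U"
begin

lemma atl_fin: "finite A"
  using atl unfolding regular_foliation_atlas_def by (elim conjE) assumption

lemma atl_chart: "\<forall>\<alpha>\<in>A. foliated_chart M (W \<alpha>) (\<psi> \<alpha>)"
  using atl unfolding regular_foliation_atlas_def by (elim conjE) assumption

lemma atl_coh: "\<forall>\<alpha>\<in>A. \<forall>\<beta>\<in>A. foliated_coherent (W \<alpha>) (\<psi> \<alpha>) (W \<beta>) (\<psi> \<beta>)"
  using atl unfolding regular_foliation_atlas_def by (elim conjE) assumption

lemma atl_UW: "\<forall>\<alpha>\<in>A. U \<alpha> \<subseteq> W \<alpha> \<and> \<psi> \<alpha> ` U \<alpha> = leaf_cube \<times> I1"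
  using atl unfolding regular_foliation_atlas_def by (elim conjE) assumption

lemma atl_reg: "\<forall>\<alpha>\<in>A. \<forall>\<beta>\<in>A.
        M interior_of (M closure_of U \<alpha>) \<inter> M interior_of (M closure_of U \<beta>) \<noteq> {} \<longrightarrow>
        (\<forall>x\<in>{-1..1}. \<forall>y\<in>{-1..1}. \<forall>y'\<in>{-1..1}.
            closed_plaque \<psi> W \<alpha> x \<inter> closed_plaque \<psi> W \<beta> y \<noteq> {} \<longrightarrow>
            closed_plaque \<psi> W \<alpha> x \<inter> closed_plaque \<psi> W \<beta> y' \<noteq> {} \<longrightarrow> y = y')"
  using atl unfolding regular_foliation_atlas_def by (elim conjE) assumption

lemma chartW: "a \<in> A \<Longrightarrow> openin M (W a) \<and> open (\<psi> a ` W a) \<and>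
   homeomorphic_map (subtopology M (W a)) (top_of_set (\<psi> a ` W a)) (\<psi> a)"
  using atl_chart unfolding foliated_chart_def by blast

lemma UW: "a \<in> A \<Longrightarrow> U a \<subseteq> W a \<and> \<psi> a ` U a = leaf_cube \<times> I1"
  using atl_UW by blast

lemma topW: "a \<in> A \<Longrightarrow> topspace (subtopology M (W a)) = W a"
  using chartW openin_subset by (auto simp: topspace_subtopology)

lemma injW: "a \<in> A \<Longrightarrow> inj_on (\<psi> a) (W a)"
  using homeomorphic_imp_injective_map chartW topW by metis

lemma img_open:
  assumes a: "a \<in> A" and V: "openin M V" "V \<subseteq> W a"
  shows "open (\<psi> a ` V)"
proof -
  have "openin (subtopology M (W a)) V" using V by (simp add: openin_subtopology_alt, blast)
  then have "openin (top_of_set (\<psi> a ` W a)) (\<psi> a ` V)"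
    using homeomorphic_map_openness[of "subtopology M (W a)" _ "\<psi> a" V] chartW[OF a] topW[OF a] V(2) by auto
  then show ?thesis using chartW[OF a] openin_open_trans by blast
qed

lemma U_open: "a \<in> A \<Longrightarrow> openin M (U a)"
proof -
  assume a: "a \<in> A"
  have sub: "U a \<subseteq> topspace (subtopology M (W a))" using UW[OF a] topW[OF a] by auto
  have "openin (top_of_set (\<psi> a ` W a)) (\<psi> a ` U a)"
  proof -
    have "open ((leaf_cube :: (real^'n) set) \<times> I1)" using open_leaf_cube open_I1 by (rule open_Times)
    then have "open (\<psi> a ` U a)" using UW[OF a] by simp
    moreover have "\<psi> a ` U a \<subseteq> \<psi> a ` W a" by (meson UW[OF a] image_mono)
    ultimately show ?thesis by (metis open_subset)
  qed
  then have "openin (subtopology M (W a)) (U a)"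
    using homeomorphic_map_openness[OF _ sub] chartW[OF a] by auto
  then show "openin M (U a)" using openin_trans_full chartW[OF a] by blast
qed

abbreviation "pl \<equiv> plaque \<psi> U"

lemma pl_mem: "p \<in> pl a x \<longleftrightarrow> p \<in> U a \<and> snd (\<psi> a p) = x" by (simp add: plaque_def)

lemma pl_I1: "a \<in> A \<Longrightarrow> p \<in> pl a x \<Longrightarrow> x \<in> I1 \<and> fst (\<psi> a p) \<in> leaf_cube"
proof -
  assume a: "a \<in> A" and p: "p \<in> pl a x"
  have "\<psi> a p \<in> leaf_cube \<times> I1" using UW[OF a] p unfolding plaque_def by blast
  then show ?thesis using p unfolding plaque_def by (cases "\<psi> a p") auto
qed

lemma atl_uniq:
  assumes a: "a\<in>A" and b: "b\<in>A" and y: "y\<in>I1" "y'\<in>I1"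
    and i1: "pl a x \<inter> pl b y \<noteq> {}" and i2: "pl a x \<inter> pl b y' \<noteq> {}"
  shows "y = y'"
proof -
  obtain p where p: "p \<in> pl a x" "p \<in> pl b y" using i1 by auto
  have pU: "p \<in> U a" "p \<in> U b" using p by (auto simp: plaque_def)
  have int: "\<And>c. c \<in> A \<Longrightarrow> U c \<subseteq> M interior_of (M closure_of U c)"
  proof -
    fix c assume c: "c \<in> A"
    have "U c \<subseteq> topspace M" using U_open[OF c] openin_subset by auto
    then show "U c \<subseteq> M interior_of (M closure_of U c)"
      by (intro interior_of_maximal closure_of_subset U_open[OF c])
  qed
  have ne: "M interior_of (M closure_of U a) \<inter> M interior_of (M closure_of U b) \<noteq> {}"
    using int[OF a] int[OF b] pU by blast
  have x: "x \<in> I1" using pl_I1[OF a p(1)] by simp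
  have lc: "leaf_cube \<subseteq> (closed_leaf_cube :: (real^'n) set)"
    unfolding leaf_cube_def closed_leaf_cube_def by (auto intro: less_imp_le)
  have sub: "pl c z \<subseteq> closed_plaque \<psi> W c z" if c: "c \<in> A" for c z
  proof
    fix q assume q: "q \<in> pl c z"
    have "q \<in> W c" using q UW[OF c] by (auto simp: plaque_def)
    moreover have "fst (\<psi> c q) \<in> closed_leaf_cube" using pl_I1[OF c q] lc by blast
    moreover have "snd (\<psi> c q) = z" using q by (simp add: plaque_def)
    ultimately show "q \<in> closed_plaque \<psi> W c z" by (simp add: closed_plaque_def)
  qed
  have I1s: "\<And>z. z \<in> I1 \<Longrightarrow> z \<in> {-1..1}" by (auto simp: I1_def)
  have "closed_plaque \<psi> W a x \<inter> closed_plaque \<psi> W b y \<noteq> {}"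
    using i1 sub[OF a, of x] sub[OF b, of y] by blast
  moreover have "closed_plaque \<psi> W a x \<inter> closed_plaque \<psi> W b y' \<noteq> {}"
    using i2 sub[OF a, of x] sub[OF b, of y'] by blast
  ultimately show ?thesis
    by (rule atl_reg[rule_format, OF a b ne I1s[OF x] I1s[OF y(1)] I1s[OF y(2)]])
qed


lemma tm_the:
  assumes a: "a\<in>A" and b: "b\<in>A" and x: "x \<in> I1" and y: "y \<in> I1" and i: "pl a x \<inter> pl b y \<noteq> {}"
  shows "x \<in> trans_dom pl a b \<and> trans_map pl a b x = y"
proof
  show "x \<in> trans_dom pl a b" using x y i unfolding trans_dom_def by blast
  show "trans_map pl a b x = y" unfolding trans_map_def
    by (rule the_equality) (use y i atl_uniq[OF a b] in auto)
qed

lemma tm_local: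
  assumes a: "a\<in>A" and b: "b\<in>A" and x: "x \<in> trans_dom pl a b"
  shows "\<exists>e>0. \<exists>h. (\<forall>x'. dist x' x < e \<longrightarrow> x' \<in> trans_dom pl a b \<and> trans_map pl a b x' = h x')
            \<and> (\<exists>d>0. (h has_real_derivative d) (at x))"
proof -
  obtain y p where yp: "y \<in> I1" "p \<in> pl a x" "p \<in> pl b y" using x unfolding trans_dom_def by blast
  have pU: "p \<in> U a" "p \<in> U b" using yp by (auto simp: plaque_def)
  define u where "u = fst (\<psi> a p)"
  have v: "\<psi> a p = (u, x)" using yp(2) u_def by (cases "\<psi> a p") (auto simp: plaque_def)
  define S where "S = \<psi> a ` (W a \<inter> W b)"
  define \<tau> where "\<tau> = (\<lambda>v. \<psi> b (inv_into (W a) (\<psi> a) v))"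
  have coh: "foliated_coherent (W a) (\<psi> a) (W b) (\<psi> b)"
    using atl_coh a b by blast
  have vS: "(u,x) \<in> S" using v pU UW[OF a] UW[OF b] unfolding S_def by (metis IntI image_eqI subsetD)
  obtain V h where Vh: "open V" "(u,x) \<in> V" "\<forall>w\<in>S \<inter> V. snd (\<tau> w) = h (snd w)"
      "\<forall>w\<in>S \<inter> V. \<exists>d. (h has_real_derivative d) (at (snd w)) \<and> d > 0"
    using coh vS unfolding foliated_coherent_def Let_def S_def[symmetric] \<tau>_def[symmetric] by blast
  define Oset where "Oset = \<psi> a ` (U a \<inter> U b)"
  have oOO: "open Oset" unfolding Oset_def
    by (rule img_open[OF a]) (use U_open[OF a] U_open[OF b] UW[OF a] in auto)
  have vOO: "(u,x) \<in> Oset" using v pU unfolding Oset_def by (metis IntI image_eqI)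
  obtain e where e: "e > 0" "ball (u,x) e \<subseteq> Oset \<inter> V"
    using open_contains_ball[THEN iffD1, OF open_Int[OF oOO Vh(1)]] vOO Vh(2) by blast
  have loc: "x' \<in> trans_dom pl a b \<and> trans_map pl a b x' = h x'" if x': "dist x' x < e" for x'
  proof -
    have "dist (u,x) (u,x') = dist x x'" by (simp add: dist_Pair_Pair)
    then have "(u,x') \<in> Oset \<inter> V" using e x' by (auto simp: dist_commute)
    then obtain p' where p': "p' \<in> U a" "p' \<in> U b" "\<psi> a p' = (u,x')" "(u,x') \<in> V" unfolding Oset_def by auto
    have p'W: "p' \<in> W a" "p' \<in> W b" using p' UW[OF a] UW[OF b] by auto
    have wS: "(u,x') \<in> S" using p'W p'(3) unfolding S_def by (metis IntI image_eqI)
    have "inv_into (W a) (\<psi> a) (u,x') = p'" by (rule inv_into_f_eq[OF injW[OF a] p'W(1) p'(3)])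
    then have "snd (\<psi> b p') = h x'" using Vh(3) wS p'(4) unfolding \<tau>_def by force
    then have pb: "p' \<in> pl b (h x')" using p' by (simp add: plaque_def)
    have pa: "p' \<in> pl a x'" using p' by (simp add: plaque_def)
    have hx: "h x' \<in> I1" using pl_I1[OF b pb] by simp
    have xx: "x' \<in> I1" using pl_I1[OF a pa] by simp
    show ?thesis using tm_the[OF a b xx hx] pa pb by blast
  qed
  obtain d where d: "(h has_real_derivative d) (at x)" "d > 0" using Vh(4) vS Vh(2) by force
  show ?thesis using e(1) loc d by blast
qed

lemma hol_pg_inst: "hol_pg (plaque \<psi> U) A"
proof
  show "finite A" by (rule atl_fin)
next
  fix a b x y y' assume "a \<in> A" "b \<in> A" "y \<in> I1" "y' \<in> I1" "pl a x \<inter> pl b y \<noteq> {}" "pl a x \<inter> pl b y' \<noteq> {}"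
  then show "y = y'" by (rule atl_uniq)
next
  fix a b assume ab: "a \<in> A" "b \<in> A"
  show "open (trans_dom pl a b)"
    unfolding open_contains_ball
  proof
    fix x assume "x \<in> trans_dom pl a b"
    then obtain e h where "e > 0" "\<forall>x'. dist x' x < e \<longrightarrow> x' \<in> trans_dom pl a b"
      using tm_local[OF ab] by blast
    then show "\<exists>e>0. ball x e \<subseteq> trans_dom pl a b" by (auto simp: dist_commute)
  qed
next
  fix a b x assume ab: "a \<in> A" "b \<in> A" and x: "x \<in> trans_dom pl a b"
  obtain e h d where eh: "e > 0" "\<forall>x'. dist x' x < e \<longrightarrow> trans_map pl a b x' = h x'"
     "(h has_real_derivative d) (at x)" "d > 0"
    using tm_local[OF ab x] by blast
  have "(trans_map pl a b has_real_derivative d) (at x)"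
    by (rule has_field_derivative_transform_within_open[OF eh(3) open_ball centre_in_ball[THEN iffD2, OF eh(1)]])
       (use eh(2) in \<open>auto simp: dist_commute\<close>)
  then show "\<exists>d>0. (trans_map pl a b has_real_derivative d) (at x)" using eh(4) by blast
qed

end

theorem lemma4p2:
  fixes M :: "'a topology" and A :: "'i set" and W U :: "'i \<Rightarrow> 'a set"
    and \<psi> :: "'i \<Rightarrow> 'a \<Rightarrow> (real^'n) \<times> real"
  assumes "compact_space M" and "Hausdorff_space M"
    and "regular_foliation_atlas M A W \<psi> U"
  shows "(\<forall>\<alpha>\<in>A. (\<lambda>x. lambda_star (plaque \<psi> U) A (\<alpha>, x)) \<in> borel_measurable (restrict_space borel I1))
       \<and> (\<forall>p\<in>A \<times> I1. \<forall>q\<in>orbit (plaque \<psi> U) A p.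
            lambda_star (plaque \<psi> U) A q = lambda_star (plaque \<psi> U) A p)"
proof -
  interpret hol_pg "plaque \<psi> U" A by (rule hol_pg_inst[OF assms(3)])
  show ?thesis using lam_meas lam_orbit by blast
qed

end
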